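(* Let $P$ be a poset. Then $P$ is the colimit in $\mathbf{Pos}$ of each of the following inclusion functors: (i) $\mathbf{pmCh}_P\to\mathbf{Pos}$; (ii) $\mathbf{mCh}_P\to\mathbf{Pos}$.
   Context: $\mathbf{Pos}$ is the category of posets and order-preserving maps; $\mathbf{Pos}_{in}$ its wide subcategory of order-preserving inclusions. A chain of $P$ is a totally ordered sub-poset. $\mathbf{pmCh}_P$ is the subcategory of $\mathbf{Pos}_{in}$ consisting of the maximal chains of $P$ together with their pairwise pullbacks in $\mathbf{Pos}$ (the full sub-posets $C_1\cap C_2$ of $P$ for maximal chains $C_1,C_2$) and the inclusions between them. A chain quasi-pullback of two chains $C_1,C_2$ of $P$ is a chain $C_{12}$ with inclusions $C_{12}\to C_1$, $C_{12}\to C_2$ such that every chain $C'$ included in both $C_1$ and $C_2$ is included in $C_{12}$; these are exactly the maximal chains of $C_1\cap C_2$. $\mathbf{mCh}_P$ is the completion, under chain quasi-pullbacks, of the discrete subcategory of $\mathbf{Pos}_{in}$ consisting of the maximal chains of $P$ (with the resulting inclusions); it is a subcategory of the category of chains of $P$ and inclusions. *)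

theory Defs
  imports Main
begin

definition poset_on :: "'a set \<Rightarrow> ('a \<Rightarrow> 'a \<Rightarrow> bool) \<Rightarrow> bool" where
  "poset_on S le \<longleftrightarrow>
     (\<forall>x\<in>S. le x x) \<and>
     (\<forall>x\<in>S. \<forall>y\<in>S. le x y \<and> le y x \<longrightarrow> x = y) \<and>
     (\<forall>x\<in>S. \<forall>y\<in>S. \<forall>z\<in>S. le x y \<and> le y z \<longrightarrow> le x z)"

definition chain_in :: "'a set \<Rightarrow> ('a \<Rightarrow> 'a \<Rightarrow> bool) \<Rightarrow> 'a set \<Rightarrow> bool" where
  "chain_in S le C \<longleftrightarrow> C \<subseteq> S \<and> (\<forall>x\<in>C. \<forall>y\<in>C. le x y \<or> le y x)"

definition max_chain :: "'a set \<Rightarrow> ('a \<Rightarrow> 'a \<Rightarrow> bool) \<Rightarrow> 'a set \<Rightarrow> bool" where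
  "max_chain S le C \<longleftrightarrow> chain_in S le C \<and> (\<forall>D. chain_in S le D \<and> C \<subseteq> D \<longrightarrow> D = C)"

text \<open>Objects of pmCh_P: maximal chains and their pairwise intersections
  (taking C1 = C2 gives the maximal chains themselves).\<close>
definition pmCh_obj :: "'a set \<Rightarrow> ('a \<Rightarrow> 'a \<Rightarrow> bool) \<Rightarrow> 'a set set" where
  "pmCh_obj S le = {A. \<exists>C1 C2. max_chain S le C1 \<and> max_chain S le C2 \<and> A = C1 \<inter> C2}"

text \<open>Objects of mCh_P: the closure of the set of maximal chains under chain
  quasi-pullbacks, i.e. maximal chains of the sub-poset C1 \<inter> C2.\<close>
inductive_set mCh_obj :: "'a set \<Rightarrow> ('a \<Rightarrow> 'a \<Rightarrow> bool) \<Rightarrow> 'a set set"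
  for S :: "'a set" and le :: "'a \<Rightarrow> 'a \<Rightarrow> bool" where
  base: "max_chain S le C \<Longrightarrow> C \<in> mCh_obj S le"
| qpb: "C1 \<in> mCh_obj S le \<Longrightarrow> C2 \<in> mCh_obj S le \<Longrightarrow> max_chain (C1 \<inter> C2) le C
        \<Longrightarrow> C \<in> mCh_obj S le"

text \<open>A cocone over the diagram of sub-posets Ob (with all inclusions between them as
  morphisms) into the poset (T, leQ): a family of order-preserving maps f A : A \<rightarrow> T,
  compatible with the inclusions.\<close>
definition is_cocone :: "('a \<Rightarrow> 'a \<Rightarrow> bool) \<Rightarrow> 'a set set \<Rightarrow> 'b set \<Rightarrow> ('b \<Rightarrow> 'b \<Rightarrow> bool)
    \<Rightarrow> ('a set \<Rightarrow> 'a \<Rightarrow> 'b) \<Rightarrow> bool" where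
  "is_cocone le Ob T leQ f \<longleftrightarrow>
     (\<forall>A\<in>Ob. (\<forall>x\<in>A. f A x \<in> T) \<and> (\<forall>x\<in>A. \<forall>y\<in>A. le x y \<longrightarrow> leQ (f A x) (f A y))) \<and>
     (\<forall>A\<in>Ob. \<forall>B\<in>Ob. A \<subseteq> B \<longrightarrow> (\<forall>x\<in>A. f B x = f A x))"

definition mono_map :: "'a set \<Rightarrow> ('a \<Rightarrow> 'a \<Rightarrow> bool) \<Rightarrow> 'b set \<Rightarrow> ('b \<Rightarrow> 'b \<Rightarrow> bool)
    \<Rightarrow> ('a \<Rightarrow> 'b) \<Rightarrow> bool" where
  "mono_map S le T leQ g \<longleftrightarrow> (\<forall>x\<in>S. g x \<in> T) \<and> (\<forall>x\<in>S. \<forall>y\<in>S. le x y \<longrightarrow> leQ (g x) (g y))"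

text \<open>Universal property of the cocone of inclusions Ob \<rightarrow> P, tested against the
  poset (T, leQ) and the cocone f: there is a unique order-preserving g : P \<rightarrow> T
  (unique as a map on the carrier S) with g restricted to A equal to f A for all A.\<close>
definition colim_univ :: "'a set \<Rightarrow> ('a \<Rightarrow> 'a \<Rightarrow> bool) \<Rightarrow> 'a set set \<Rightarrow> 'b set
    \<Rightarrow> ('b \<Rightarrow> 'b \<Rightarrow> bool) \<Rightarrow> ('a set \<Rightarrow> 'a \<Rightarrow> 'b) \<Rightarrow> bool" where
  "colim_univ S le Ob T leQ f \<longleftrightarrow>
     (poset_on T leQ \<and> is_cocone le Ob T leQ f \<longrightarrow>
       (\<exists>g. mono_map S le T leQ g \<and> (\<forall>A\<in>Ob. \<forall>x\<in>A. g x = f A x)) \<and>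
       (\<forall>g g'. mono_map S le T leQ g \<and> (\<forall>A\<in>Ob. \<forall>x\<in>A. g x = f A x) \<and>
               mono_map S le T leQ g' \<and> (\<forall>A\<in>Ob. \<forall>x\<in>A. g' x = f A x)
               \<longrightarrow> (\<forall>x\<in>S. g x = g' x)))"

end

theory Submission
  imports Defs
begin

lemma extend_max_chain:
  assumes D: "chain_in S le D"
  shows "\<exists>C. max_chain S le C \<and> D \<subseteq> C"
proof -
  let ?A = "{C. chain_in S le C \<and> D \<subseteq> C}"
  have "\<exists>M\<in>?A. \<forall>X\<in>?A. M \<subseteq> X \<longrightarrow> X = M"
  proof (rule subset_Zorn)
    fix Ch assume ch: "subset.chain ?A Ch"
    show "\<exists>U\<in>?A. \<forall>X\<in>Ch. X \<subseteq> U"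
    proof (cases "Ch = {}")
      case True then show ?thesis using D by auto
    next
      case False
      have "chain_in S le (\<Union>Ch)"
        unfolding chain_in_def
      proof (intro conjI ballI)
        show "\<Union>Ch \<subseteq> S" using ch by (auto simp: subset_chain_def chain_in_def)
        fix x y assume "x \<in> \<Union>Ch" "y \<in> \<Union>Ch"
        then obtain X Y where "X \<in> Ch" "Y \<in> Ch" "x \<in> X" "y \<in> Y" by blast
        moreover have "X \<subseteq> Y \<or> Y \<subseteq> X" using ch \<open>X \<in> Ch\<close> \<open>Y \<in> Ch\<close>
          by (auto simp: subset_chain_def)
        ultimately obtain Z where "Z \<in> Ch" "x \<in> Z" "y \<in> Z" by blast
        moreover have "chain_in S le Z" using ch \<open>Z \<in> Ch\<close> by (auto simp: subset_chain_def)
        ultimately show "le x y \<or> le y x" by (auto simp: chain_in_def)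
      qed
      moreover have "D \<subseteq> \<Union>Ch"
      proof -
        obtain Z where "Z \<in> Ch" using False by blast
        then have "D \<subseteq> Z" using ch by (auto simp: subset_chain_def)
        then show ?thesis using \<open>Z \<in> Ch\<close> by blast
      qed
      ultimately show ?thesis by auto
    qed
  qed
  then obtain M where M: "M \<in> ?A" "\<forall>X\<in>?A. M \<subseteq> X \<longrightarrow> X = M" by blast
  have "max_chain S le M" unfolding max_chain_def
  proof (intro conjI allI impI)
    show "chain_in S le M" using M by auto
    fix E assume "chain_in S le E \<and> M \<subseteq> E"
    then show "E = M" using M by auto
  qed
  then show ?thesis using M by auto
qed

lemma max_chain_sub: "max_chain S le C \<Longrightarrow> C \<subseteq> S"
  by (auto simp: max_chain_def chain_in_def)

lemma mCh_sub_max: "A \<in> mCh_obj S le \<Longrightarrow> \<exists>C. max_chain S le C \<and> A \<subseteq> C"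
proof (induction rule: mCh_obj.induct)
  case (base C) then show ?case by auto
next
  case (qpb C1 C2 C)
  obtain E where E: "max_chain S le E" "C1 \<subseteq> E" using qpb.IH(1) by blast
  have "C \<subseteq> C1 \<inter> C2" using qpb.hyps(3) unfolding max_chain_def chain_in_def by blast
  then show ?case using E by blast
qed

lemma int_in_mCh:
  assumes "max_chain S le C" "max_chain S le D"
  shows "C \<inter> D \<in> mCh_obj S le"
proof -
  have "chain_in S le C" using assms(1) unfolding max_chain_def by blast
  then have "chain_in (C \<inter> D) le (C \<inter> D)" unfolding chain_in_def by blast
  then have "max_chain (C \<inter> D) le (C \<inter> D)" unfolding max_chain_def chain_in_def by blast
  then show ?thesis using mCh_obj.qpb[OF mCh_obj.base[OF assms(1)] mCh_obj.base[OF assms(2)]] by blast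
qed

lemma cc_in: "is_cocone le Ob T leQ f \<Longrightarrow> A \<in> Ob \<Longrightarrow> x \<in> A \<Longrightarrow> f A x \<in> T"
  unfolding is_cocone_def by blast
lemma cc_mono: "is_cocone le Ob T leQ f \<Longrightarrow> A \<in> Ob \<Longrightarrow> x \<in> A \<Longrightarrow> y \<in> A \<Longrightarrow> le x y
   \<Longrightarrow> leQ (f A x) (f A y)"
  unfolding is_cocone_def by blast
lemma cc_compat: "is_cocone le Ob T leQ f \<Longrightarrow> A \<in> Ob \<Longrightarrow> B \<in> Ob \<Longrightarrow> A \<subseteq> B \<Longrightarrow> x \<in> A
   \<Longrightarrow> f B x = f A x"
  unfolding is_cocone_def by blast

lemma generic:
  assumes P: "poset_on S le"
    and obmax: "\<And>C. max_chain S le C \<Longrightarrow> C \<in> Ob"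
    and obint: "\<And>C D. max_chain S le C \<Longrightarrow> max_chain S le D \<Longrightarrow> C \<inter> D \<in> Ob"
    and obsub: "\<And>A. A \<in> Ob \<Longrightarrow> \<exists>C. max_chain S le C \<and> A \<subseteq> C"
  shows "colim_univ S le Ob T leQ f"
proof -
  have refl: "\<And>x. x \<in> S \<Longrightarrow> le x x" using P unfolding poset_on_def by blast
  have pt: "\<exists>C. max_chain S le C \<and> x \<in> C" if "x \<in> S" for x
  proof -
    have "chain_in S le {x}" using refl that by (simp add: chain_in_def)
    then obtain C where "max_chain S le C" "{x} \<subseteq> C" using extend_max_chain by blast
    then show ?thesis by blast
  qed
  have pr: "\<exists>C. max_chain S le C \<and> x \<in> C \<and> y \<in> C" if "x \<in> S" "y \<in> S" "le x y" for x y
  proof -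
    have "chain_in S le {x,y}" using refl that by (simp add: chain_in_def)
    then obtain C where "max_chain S le C" "{x,y} \<subseteq> C" using extend_max_chain by blast
    then show ?thesis by blast
  qed
  show ?thesis unfolding colim_univ_def
  proof (intro impI conjI allI)
    assume "poset_on T leQ \<and> is_cocone le Ob T leQ f"
    then have cc: "is_cocone le Ob T leQ f" by blast
    have agree: "f C x = f D x" if "max_chain S le C" "max_chain S le D" "x \<in> C" "x \<in> D" for C D x
    proof -
      have i: "C \<inter> D \<in> Ob" "x \<in> C \<inter> D" using obint[OF that(1,2)] that by auto
      have "f C x = f (C \<inter> D) x" using cc_compat[OF cc i(1) obmax[OF that(1)] _ i(2)] by blast
      also have "\<dots> = f D x" using cc_compat[OF cc i(1) obmax[OF that(2)] _ i(2)] by simp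
      finally show ?thesis .
    qed
    define g where "g x = f (SOME C. max_chain S le C \<and> x \<in> C) x" for x
    have gC: "g x = f C x" if "max_chain S le C" "x \<in> C" for C x
    proof -
      have "x \<in> S" using that max_chain_sub by blast
      then have "max_chain S le (SOME C. max_chain S le C \<and> x \<in> C) \<and> x \<in> (SOME C. max_chain S le C \<and> x \<in> C)"
        using someI_ex[OF pt] by blast
      then show ?thesis unfolding g_def using agree that by blast
    qed
    have "mono_map S le T leQ g" unfolding mono_map_def
    proof (intro conjI ballI impI)
      fix x assume "x \<in> S"
      then obtain C where C: "max_chain S le C" "x \<in> C" using pt by blast
      then have "C \<in> Ob" using obmax by blast
      then show "g x \<in> T" using gC[OF C] cc_in[OF cc _ C(2)] by simp
    next
      fix x y assume "x \<in> S" "y \<in> S" "le x y"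
      then obtain C where C: "max_chain S le C" "x \<in> C" "y \<in> C" using pr by blast
      then have "C \<in> Ob" using obmax by blast
      then show "leQ (g x) (g y)" using gC[OF C(1,2)] gC[OF C(1,3)] cc_mono[OF cc _ C(2,3) \<open>le x y\<close>] by simp
    qed
    moreover have "\<forall>A\<in>Ob. \<forall>x\<in>A. g x = f A x"
    proof (intro ballI)
      fix A x assume "A \<in> Ob" "x \<in> A"
      then obtain C where C: "max_chain S le C" "A \<subseteq> C" using obsub by blast
      then have "g x = f C x" using gC \<open>x \<in> A\<close> by blast
      also have "\<dots> = f A x" using cc_compat[OF cc \<open>A \<in> Ob\<close> obmax[OF C(1)] C(2) \<open>x \<in> A\<close>] .
      finally show "g x = f A x" .
    qed
    ultimately show "\<exists>g. mono_map S le T leQ g \<and> (\<forall>A\<in>Ob. \<forall>x\<in>A. g x = f A x)" by blast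
  next
    fix g g'
    assume h: "mono_map S le T leQ g \<and> (\<forall>A\<in>Ob. \<forall>x\<in>A. g x = f A x) \<and>
               mono_map S le T leQ g' \<and> (\<forall>A\<in>Ob. \<forall>x\<in>A. g' x = f A x)"
    show "\<forall>x\<in>S. g x = g' x"
    proof
      fix x assume "x \<in> S"
      then obtain C where "max_chain S le C" "x \<in> C" using pt by blast
      then have "C \<in> Ob" using obmax by blast
      have "g x = f C x" using h \<open>C \<in> Ob\<close> \<open>x \<in> C\<close> by blast
      moreover have "g' x = f C x" using h \<open>C \<in> Ob\<close> \<open>x \<in> C\<close> by blast
      ultimately show "g x = g' x" by simp
    qed
  qed
qed

theorem proposition6p2:
  fixes S :: "'a set" and le :: "'a \<Rightarrow> 'a \<Rightarrow> bool"
    and T :: "'b set" and leQ :: "'b \<Rightarrow> 'b \<Rightarrow> bool" and f :: "'a set \<Rightarrow> 'a \<Rightarrow> 'b"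
  assumes "poset_on S le"
  shows "(\<forall>A\<in>pmCh_obj S le. A \<subseteq> S) \<and> colim_univ S le (pmCh_obj S le) T leQ f
       \<and> (\<forall>A\<in>mCh_obj S le. A \<subseteq> S) \<and> colim_univ S le (mCh_obj S le) T leQ f"
proof (intro conjI)
  show "\<forall>A\<in>pmCh_obj S le. A \<subseteq> S" unfolding pmCh_obj_def using max_chain_sub by blast
  show "\<forall>A\<in>mCh_obj S le. A \<subseteq> S" using mCh_sub_max max_chain_sub by blast
  show "colim_univ S le (pmCh_obj S le) T leQ f"
    by (rule generic[OF assms]) (unfold pmCh_obj_def, blast, blast, blast)
  show "colim_univ S le (mCh_obj S le) T leQ f"
    by (rule generic[OF assms]) (erule mCh_obj.base, erule (1) int_in_mCh, erule mCh_sub_max)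
qed

end
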